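(* Let $m>1$ and $k$ be positive integers. Then $\mathrm{msum}(mk+1,k)\ge k/2$.
   Context: For positive integers $n>k$, let $S_n$ be the set of permutations $\pi=(\pi_1,\dots,\pi_n)$ of $1,\dots,n$, with cyclic indexing $\pi_{n+i}=\pi_i$, and $s_i=\sum_{j=0}^{k-1}\pi_{i+j}$ for $i=1,\dots,n$. Define $\mathrm{msum}(\pi,k)=\max_{1\le i\le n}s_i-\frac{k(n+1)}{2}$ and $\mathrm{msum}(n,k)=\min_{\pi\in S_n}\mathrm{msum}(\pi,k)$. *)

theory Defs
  imports Complex_Main
begin

text \<open>A permutation \<pi> = (\<pi>_1,...,\<pi>_n) of 1..n is encoded 0-indexed as a function
  p with p i = \<pi>_(i+1) for i < n, a bijection from {0..<n} onto {1..n};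
  values outside {0..<n} are fixed to a default to make the set finite.\<close>

definition perms :: "nat \<Rightarrow> (nat \<Rightarrow> nat) set" where
  "perms n = {p. bij_betw p {0..<n} {1..n} \<and> (\<forall>i. i \<ge> n \<longrightarrow> p i = undefined)}"

definition wsum :: "nat \<Rightarrow> nat \<Rightarrow> (nat \<Rightarrow> nat) \<Rightarrow> nat \<Rightarrow> nat" where
  "wsum n k p i = (\<Sum>j<k. p ((i + j) mod n))"

definition msum_perm :: "nat \<Rightarrow> nat \<Rightarrow> (nat \<Rightarrow> nat) \<Rightarrow> real" where
  "msum_perm n k p = real (Max (wsum n k p ` {0..<n})) - real k * (real n + 1) / 2"

definition msum :: "nat \<Rightarrow> nat \<Rightarrow> real" where
  "msum n k = Min (msum_perm n k ` perms n)"

end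

theory Submission
  imports Defs "HOL-Library.FuncSet" "HOL-Number_Theory.Cong"
begin

lemma sum_blocks:
  fixes f :: "nat \<Rightarrow> nat"
  shows "(\<Sum>t<m. \<Sum>j<k. f (t*k+j)) = (\<Sum>j<m*k. f j)"
proof (induction m)
  case 0 then show ?case by simp
next
  case (Suc m)
  have "(\<Sum>j<Suc m*k. f j) = (\<Sum>j<m*k. f j) + (\<Sum>j=m*k..<m*k+k. f j)"
    by (simp add: lessThan_atLeast0 sum.atLeastLessThan_concat add.commute)
  also have "(\<Sum>j=m*k..<m*k+k. f j) = (\<Sum>j<k. f (m*k+j))"
    using sum.shift_bounds_nat_ivl[of f 0 "m*k" k]
    by (simp add: lessThan_atLeast0 add.commute)
  finally show ?case using Suc by simp
qed

lemma gauss2: "2 * (\<Sum>i\<in>{1..n}. i) = n * (n + 1::nat)"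
  by (induction n) (auto simp: algebra_simps)

lemma rot_image:
  fixes c n :: nat
  assumes "n > 0"
  shows "(\<lambda>j. (c + j) mod n) ` {..<n} = {..<n}"
proof -
  have inj: "inj_on (\<lambda>j. (c + j) mod n) {..<n}"
  proof (rule inj_onI)
    fix i j assume "i \<in> {..<n}" "j \<in> {..<n}" "(c + i) mod n = (c + j) mod n"
    then have "[c + i = c + (j::nat)] (mod n)" by (simp add: cong_def)
    then have "[i = j] (mod n)" by (simp add: cong_add_lcancel_nat)
    then show "i = j" using \<open>i \<in> {..<n}\<close> \<open>j \<in> {..<n}\<close> by (simp add: cong_def)
  qed
  have "(\<lambda>j. (c + j) mod n) ` {..<n} \<subseteq> {..<n}" using assms by (auto intro: mod_less_divisor)
  moreover have "card ((\<lambda>j. (c + j) mod n) ` {..<n}) = card {..<n}"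
    using card_image[OF inj] by simp
  ultimately show ?thesis by (simp add: card_subset_eq)
qed

lemma main_bound:
  assumes m: "m > 1" and k: "k > 0" and p: "p \<in> perms (m*k+1)"
  shows "2 * Max (wsum (m*k+1) k p ` {0..<m*k+1}) \<ge> k * (m*k+3)"
proof -
  define n where "n = m*k+1"
  have n0: "n > 0" by (simp add: n_def)
  have bij: "bij_betw p {0..<n} {1..n}" using p by (simp add: perms_def n_def)
  have "1 \<in> p ` {0..<n}" using bij n0 by (simp add: bij_betw_def)
  then obtain a where a: "a < n" "p a = 1" by auto
  define g where "g j = (a + 1 + j) mod n" for j
  have rot: "g ` {..<n} = {..<n}" unfolding g_def using rot_image[OF n0, of "a+1"] by simp
  have injg: "inj_on g {..<n}"
    using rot by (simp add: eq_card_imp_inj_on)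
  have sumall: "(\<Sum>j<n. p (g j)) = sum p {..<n}"
    using sum.reindex[OF injg, of p] rot by simp
  have "sum p {..<n} = sum p {0..<n}" by (simp add: lessThan_atLeast0)
  also have "\<dots> = (\<Sum>i\<in>{1..n}. i)"
    using sum.reindex_bij_betw[OF bij, of "\<lambda>i. i"] by simp
  finally have s1: "2 * sum p {..<n} = n*(n+1)" using gauss2 by simp
  have "(\<Sum>j<n. p (g j)) = (\<Sum>j<m*k. p (g j)) + p (g (m*k))"
    by (simp add: n_def)
  moreover have "g (m*k) = a" proof - have "a + 1 + m*k = a + n" by (simp add: n_def) then have "g (m*k) = (a+n) mod n" unfolding g_def by metis then show ?thesis using a by simp qed
  ultimately have s2: "2 * (\<Sum>j<m*k. p (g j)) + 2 = n*(n+1)"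
    using sumall s1 a by simp
  have blocks: "(\<Sum>t<m. wsum n k p ((a+1+t*k) mod n)) = (\<Sum>j<m*k. p (g j))"
  proof -
    have "(\<Sum>t<m. wsum n k p ((a+1+t*k) mod n)) = (\<Sum>t<m. \<Sum>j<k. p (g (t*k+j)))"
      unfolding wsum_def g_def by (simp add: mod_add_left_eq add.assoc)
    then show ?thesis using sum_blocks[where f="\<lambda>j. p (g j)" and m=m and k=k] by simp
  qed
  define M where "M = Max (wsum n k p ` {0..<n})"
  have le: "wsum n k p ((a+1+t*k) mod n) \<le> M" for t
    unfolding M_def by (rule Max_ge) (use n0 in auto)
  have "(\<Sum>t<m. wsum n k p ((a+1+t*k) mod n)) \<le> (\<Sum>t<m. M)"
    by (rule sum_mono) (rule le)
  then have "2 * (\<Sum>j<m*k. p (g j)) \<le> 2 * m * M" using blocks by simp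
  with s2 have "n*(n+1) \<le> 2*m*M + 2" by simp
  moreover have "n*(n+1) = m * (k*(m*k+3)) + 2" by (simp add: n_def algebra_simps)
  ultimately have "m * (k*(m*k+3)) \<le> m * (2*M)" by simp
  then have "k*(m*k+3) \<le> 2*M" using m by simp
  then show ?thesis by (simp add: M_def n_def)
qed

lemma perms_finite: "finite (perms n)"
proof -
  have "perms n \<subseteq> (\<lambda>f i. if i < n then f i else undefined) ` ({0..<n} \<rightarrow>\<^sub>E {1..n})"
  proof
    fix p assume p: "p \<in> perms n"
    then have b: "bij_betw p {0..<n} {1..n}" and u: "\<forall>i. i \<ge> n \<longrightarrow> p i = undefined"
      by (auto simp: perms_def)
    let ?f = "restrict p {0..<n}"
    have "?f \<in> {0..<n} \<rightarrow>\<^sub>E {1..n}" using b by (auto simp: bij_betw_def)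
    moreover have "p = (\<lambda>i. if i < n then ?f i else undefined)"
      using u by (auto intro!: ext)
    ultimately show "p \<in> (\<lambda>f i. if i < n then f i else undefined) ` ({0..<n} \<rightarrow>\<^sub>E {1..n})"
      by blast
  qed
  moreover have "finite ({0..<n} \<rightarrow>\<^sub>E {1..n})" by (rule finite_PiE) auto
  ultimately show ?thesis by (meson finite_surj)
qed

lemma perms_nonempty: "perms n \<noteq> {}"
proof -
  define p where "p i = (if i < n then i + 1 else undefined)" for i
  have "bij_betw p {0..<n} {1..n}"
  proof -
    have "bij_betw (\<lambda>i. i + 1) {0..<n} {1..n}"
      by (rule bij_betw_byWitness[where f'="\<lambda>i. i - 1"]) auto
    then show ?thesis by (rule bij_betw_cong[THEN iffD1, rotated]) (simp add: p_def)
  qed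
  then have "p \<in> perms n" by (simp add: perms_def p_def)
  then show ?thesis by blast
qed

theorem lemma3p1:
  fixes m k :: nat
  assumes "m > 1" and "k > 0"
  shows "msum (m * k + 1) k \<ge> real k / 2"
  unfolding msum_def
proof (rule Min.boundedI)
  show "finite (msum_perm (m * k + 1) k ` perms (m * k + 1))" using perms_finite by simp
  show "msum_perm (m * k + 1) k ` perms (m * k + 1) \<noteq> {}" using perms_nonempty by simp
  fix x assume "x \<in> msum_perm (m * k + 1) k ` perms (m * k + 1)"
  then obtain p where p: "p \<in> perms (m*k+1)" and x: "x = msum_perm (m * k + 1) k p" by auto
  define M where "M = Max (wsum (m*k+1) k p ` {0..<m*k+1})"
  have "2 * M \<ge> k * (m*k+3)" using main_bound[OF assms p] by (simp add: M_def)
  then have h: "real (k * (m*k+3)) \<le> real (2 * M)" by (simp only: of_nat_le_iff)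
  have "x = real M - real k * (real (m*k+1) + 1) / 2"
    unfolding x msum_perm_def M_def by simp
  also have "\<dots> = real M - real (k * (m*k+3)) / 2 + real k / 2"
    by (simp add: field_simps)
  finally show "real k / 2 \<le> x" using h by simp
qed

end
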